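(* For $\tau\in\mathcal{L}$, the space $(\mathbb{R},\tau)$ is of first category if and only if every nonempty $\tau$-open set is an unbounded subset of $\mathbb{R}$.
   Context: $\eta$ denotes the Euclidean topology on $\mathbb{R}$. $\mathcal{L}$ denotes the family of all Hausdorff topologies $\tau$ on $\mathbb{R}$ with $\tau\subset\eta$. *)

theory Defs
  imports "HOL-Analysis.Analysis"
begin

definition nowhere_dense_in :: "'a topology \<Rightarrow> 'a set \<Rightarrow> bool" where
  "nowhere_dense_in X S \<longleftrightarrow> S \<subseteq> topspace X \<and> X interior_of (X closure_of S) = {}"

definition first_category_space :: "'a topology \<Rightarrow> bool" where
  "first_category_space X \<longleftrightarrow>
     (\<exists>\<F>. countable \<F> \<and> (\<forall>S\<in>\<F>. nowhere_dense_in X S) \<and> \<Union>\<F> = topspace X)"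

text \<open>The family L: Hausdorff topologies on the reals coarser than the Euclidean one.\<close>
definition coarser_Hausdorff_real :: "real topology \<Rightarrow> bool" where
  "coarser_Hausdorff_real \<tau> \<longleftrightarrow>
     topspace \<tau> = UNIV \<and> Hausdorff_space \<tau> \<and> (\<forall>S. openin \<tau> S \<longrightarrow> open S)"

end

theory Submission
  imports Defs
begin

lemma cont_id_tau:
  assumes "coarser_Hausdorff_real \<tau>"
  shows "continuous_map euclidean \<tau> id"
  using assms unfolding coarser_Hausdorff_real_def continuous_map_def by auto

lemma compact_closedin_tau:
  assumes "coarser_Hausdorff_real \<tau>" "compact C"
  shows "closedin \<tau> C"
proof -
  have "compactin \<tau> (id ` C)"
    by (rule image_compactin[OF _ cont_id_tau[OF assms(1)]]) (use assms(2) in simp)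
  then have "compactin \<tau> C" by simp
  then show ?thesis using assms(1) compactin_imp_closedin
    unfolding coarser_Hausdorff_real_def by blast
qed

lemma open_sub_tau:
  assumes "coarser_Hausdorff_real \<tau>" "openin \<tau> U" "bounded U" "open W" "W \<subseteq> U"
  shows "openin \<tau> W"
proof -
  have "compact (closure U - W)"
  proof -
    have "compact (closure U)" using assms(3) compact_closure by blast
    moreover have "closed (- W)" using assms(4) by (simp add: closed_open)
    ultimately have "compact (closure U \<inter> - W)" by (rule compact_Int_closed)
    then show ?thesis by (simp add: Diff_eq)
  qed
  then have "closedin \<tau> (closure U - W)" by (rule compact_closedin_tau[OF assms(1)])
  have "openin \<tau> (U - (closure U - W))" using openin_diff[OF assms(2)] \<open>closedin \<tau> (closure U - W)\<close> by blast
  moreover have "U - (closure U - W) = W" using assms(5) closure_subset by blast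
  ultimately show ?thesis by simp
qed

theorem proposition2:
  fixes \<tau> :: "real topology"
  assumes "coarser_Hausdorff_real \<tau>"
  shows "first_category_space \<tau> \<longleftrightarrow>
           (\<forall>U. openin \<tau> U \<and> U \<noteq> {} \<longrightarrow> \<not> bounded U)"
proof
  assume fc: "first_category_space \<tau>"
  show "\<forall>U. openin \<tau> U \<and> U \<noteq> {} \<longrightarrow> \<not> bounded U"
  proof (intro allI impI notI)
    fix U assume U: "openin \<tau> U \<and> U \<noteq> {}" and bU: "bounded U"
    have oU: "open U" using U assms unfolding coarser_Hausdorff_real_def by blast
    obtain F where F: "countable F" "\<forall>S\<in>F. nowhere_dense_in \<tau> S" "\<Union>F = topspace \<tau>"
      using fc unfolding first_category_space_def by blast
    have top: "topspace \<tau> = UNIV" using assms unfolding coarser_Hausdorff_real_def by blast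
    define G where "G = (\<lambda>S. - closure (S \<inter> U)) ` F"
    have dense: "UNIV \<subseteq> closure T" if TG: "T \<in> G" for T
    proof -
      obtain S where S: "S \<in> F" "T = - closure (S \<inter> U)" using TG G_def by blast
      have "interior (closure (S \<inter> U)) = {}"
      proof (rule ccontr)
        assume "interior (closure (S \<inter> U)) \<noteq> {}"
        define W where "W = interior (closure (S \<inter> U)) \<inter> U"
        have "interior (closure (S \<inter> U)) \<subseteq> closure U"
          by (meson closure_mono inf_le2 interior_subset order_trans)
        then have Wne: "W \<noteq> {}" unfolding W_def
          using \<open>interior (closure (S \<inter> U)) \<noteq> {}\<close> open_Int_closure_eq_empty[OF open_interior, of "closure (S \<inter> U)" U]
          by blast
        have oW: "open W" unfolding W_def using oU by blast
        have tW: "openin \<tau> W" using open_sub_tau[OF assms U[THEN conjunct1] bU oW] W_def by blast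
        have "W \<subseteq> closure S" unfolding W_def
          by (meson closure_mono inf_le1 interior_subset le_infI1 order_trans)
        also have "closure S \<subseteq> \<tau> closure_of S"
        proof
          fix x assume "x \<in> closure S"
          show "x \<in> \<tau> closure_of S"
            unfolding closure_of_def top
          proof (intro CollectI conjI allI impI UNIV_I)
            fix V assume "x \<in> V \<and> openin \<tau> V"
            then have "open V" using assms unfolding coarser_Hausdorff_real_def by blast
            then show "\<exists>y\<in>S. y \<in> V" using \<open>x \<in> closure S\<close> \<open>x \<in> V \<and> openin \<tau> V\<close>
              by (meson closure_iff_nhds_not_empty disjoint_iff order_refl)
          qed
        qed
        finally have "W \<subseteq> \<tau> interior_of (\<tau> closure_of S)"
          using tW by (simp add: interior_of_maximal)
        moreover have "\<tau> interior_of (\<tau> closure_of S) = {}"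
          using F(2) S(1) unfolding nowhere_dense_in_def by blast
        ultimately show False using Wne by blast
      qed
      then show ?thesis using S(2)
        by (simp add: closure_complement)
    qed
    have cG: "countable G" using F(1) G_def by simp
    have oG: "openin (top_of_set UNIV) T" if "T \<in> G" for T
    proof -
      have "open T" using that G_def by auto
      then show ?thesis by simp
    qed
    have "UNIV \<subseteq> closure (\<Inter>G)"
      by (rule Baire[of UNIV, OF closed_UNIV cG]) (use dense oG in blast)
    have "\<Inter>G \<inter> U \<noteq> {}"
    proof
      assume "\<Inter>G \<inter> U = {}"
      then have "U \<inter> closure (\<Inter>G) = {}" using oU open_Int_closure_eq_empty by (metis inf_commute)
      then show False using U \<open>UNIV \<subseteq> closure (\<Inter>G)\<close> by blast
    qed
    then obtain x where x: "x \<in> \<Inter>G" "x \<in> U" by blast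
    then obtain S where "S \<in> F" "x \<in> S" using F(3) top by blast
    then have "x \<in> closure (S \<inter> U)" using x(2) closure_subset by blast
    moreover have "x \<in> - closure (S \<inter> U)" using x(1) \<open>S \<in> F\<close> G_def by blast
    ultimately show False by blast
  qed
next
  assume H: "\<forall>U. openin \<tau> U \<and> U \<noteq> {} \<longrightarrow> \<not> bounded U"
  have top: "topspace \<tau> = UNIV" using assms unfolding coarser_Hausdorff_real_def by blast
  define F where "F = range (\<lambda>n::nat. {-real n..real n})"
  have "nowhere_dense_in \<tau> S" if "S \<in> F" for S
  proof -
    obtain n where S: "S = {-real n..real n}" using \<open>S \<in> F\<close> F_def by blast
    have "closedin \<tau> S" using compact_closedin_tau[OF assms] S by simp
    then have "\<tau> closure_of S = S" by (rule closure_of_closedin)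
    moreover have "\<tau> interior_of S = {}"
    proof (rule ccontr)
      assume "\<tau> interior_of S \<noteq> {}"
      moreover have "bounded (\<tau> interior_of S)"
        using S interior_of_subset bounded_closed_interval bounded_subset by metis
      ultimately show False using H openin_interior_of by blast
    qed
    ultimately show ?thesis unfolding nowhere_dense_in_def top by simp
  qed
  moreover have "\<Union>F = topspace \<tau>"
  proof -
    have "x \<in> \<Union>F" for x :: real
    proof -
      obtain n :: nat where "\<bar>x\<bar> \<le> real n" using real_arch_simple by blast
      then have "x \<in> {-real n..real n}" by (simp add: abs_le_iff)
      then show ?thesis unfolding F_def by (rule UN_I[OF UNIV_I])
    qed
    then show ?thesis using top by blast
  qed
  moreover have "countable F" unfolding F_def by simp
  ultimately show "first_category_space \<tau>"
    unfolding first_category_space_def by (intro exI[of _ F]) simp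
qed

end
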